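(* Let $\Omega\subset\mathbb{R}^n$ be a bounded open set, $s\in(0,1)$ and $p,q\in[1,\infty)$. Then for every $\xi\in\mathbb{S}^{n-1}$ and every $f\in C^1(\mathbb{R}^n)$ with support in $\Omega$, $$\|f\|_{L^p}\le C(1-s)^{\frac1q}\,\mathrm{w}(\Omega,\xi)^s\Big(\int_0^{\mathrm{w}(\Omega,\xi)}t^{-sq}\|\Delta_{t\xi}f\|^q_{L^p}\frac{dt}{t}\Big)^{1/q},$$ where $$C=\frac{9}{c_p}\Big(\frac{q}{sq+1}\Big)^{1/q}\max\Big\{1,\frac{c_p}{3}\Big\}^{1-s},\qquad c_p=\begin{cases}\frac2p\,\frac{\pi-\pi/p}{\sin(\pi/p)}(p-1)^{\frac1p-1},&p>1,\\ 2,&p=1.\end{cases}$$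
   Context: $\Delta_hf(x)=f(x+h)-f(x)$. $\mathrm{w}(\Omega,\xi)=\sup_{x,y\in\Omega}(x-y)\cdot\xi$ is the width of $\Omega$ in the direction $\xi$. *)

theory Defs
  imports "HOL-Analysis.Analysis"
begin

definition Lp_norm :: "real \<Rightarrow> ('a::euclidean_space \<Rightarrow> real) \<Rightarrow> real" where
  "Lp_norm p g = (\<integral>x. \<bar>g x\<bar> powr p \<partial>lebesgue) powr (1 / p)"

definition fdiff :: "'a::real_vector \<Rightarrow> ('a \<Rightarrow> real) \<Rightarrow> 'a \<Rightarrow> real" where
  "fdiff h f x = f (x + h) - f x"

definition width :: "'a::real_inner set \<Rightarrow> 'a \<Rightarrow> real" where
  "width \<Omega> \<xi> = (SUP xy\<in>\<Omega> \<times> \<Omega>. (fst xy - snd xy) \<bullet> \<xi>)"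

definition c_const :: "real \<Rightarrow> real" where
  "c_const p = (if p = 1 then 2
     else (2 / p) * ((pi - pi / p) / sin (pi / p)) * (p - 1) powr (1 / p - 1))"

definition C1_on_UNIV :: "('a::euclidean_space \<Rightarrow> real) \<Rightarrow> bool" where
  "C1_on_UNIV f \<longleftrightarrow> (\<exists>f'. (\<forall>x. (f has_derivative f' x) (at x)) \<and>
      continuous_on UNIV f')"

end

theory Submission
  imports Defs
begin



lemma amgm:
  fixes x u :: real
  assumes "0 \<le> x" "0 \<le> u" "u \<le> 1"
  shows "x powr u \<le> u*x + (1-u)"
proof (cases "x = 0")
  case True thus ?thesis using assms by simp
next
  case False
  have "x powr u * 1 powr (1-u) \<le> u*x + (1-u)*1"
    by (rule Youngs_inequality_0) (use assms False in auto)
  thus ?thesis by simp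
qed

lemma sin_lower:
  fixes x :: real assumes "0 \<le> x"
  shows "x - x^3/6 - x^5/120 \<le> sin x"
proof -
  have "\<bar>sin x - (\<Sum>m<5. sin_coeff m * x ^ m)\<bar> \<le> inverse (fact 5) * \<bar>x\<bar> ^ 5"
    by (rule Maclaurin_sin_bound)
  moreover have "(\<Sum>m<5. sin_coeff m * x ^ m) = x - x^3/6"
  proof -
    have e: "(\<Sum>m<(5::nat). g m) = g 0 + g 1 + g 2 + g 3 + (g 4::real)" for g
      by (simp add: eval_nat_numeral)
    have "sin_coeff 0 = 0" "sin_coeff 1 = 1" "sin_coeff 2 = 0" "sin_coeff 3 = -1/6" "sin_coeff 4 = 0"
      by (simp_all add: sin_coeff_def fact_numeral)
    thus ?thesis by (simp add: e)
  qed
  ultimately have "\<bar>sin x - (x - x^3/6)\<bar> \<le> x^5/120" using assms by (simp add: fact_numeral)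
  thus ?thesis by linarith
qed

lemma two_powr_ge: fixes u :: real assumes "u \<le> 1" shows "2*u \<le> 2 powr u"
proof -
  have a: "2 powr u = 2 * exp (-(1-u) * ln 2)"
    by (simp add: powr_def exp_diff algebra_simps exp_minus field_simps)
  have b: "exp (-(1-u) * ln 2) \<ge> 1 + (-(1-u) * ln 2)" by (rule exp_ge_add_one_self)
  have "(1-u) * ln 2 \<le> (1-u)" using assms ln_2_less_1 by (intro mult_left_le) auto
  thus ?thesis using a b by linarith
qed

lemma sin_lower2:
  fixes x :: real assumes "0 \<le> x" "x \<le> 8/5"
  shows "x - x^3 / 53 * 10 \<le> sin x"
proof -
  have "x^5/120 = x^3 * x^2 / 120" by (simp add: power_add[symmetric])
  moreover have "x^2 \<le> (8/5)^2" using assms by (intro power_mono) auto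
  moreover have "0 \<le> x^3" using assms by simp
  ultimately have "x^3 * x^2 \<le> x^3 * (64/25)" by (intro mult_left_mono) (auto simp: power2_eq_square)
  hence "x^5/120 \<le> x^3 * (64/25)/120" by (simp add: power_add[symmetric])
  moreover have "0 \<le> x^3" using assms by simp
  ultimately show ?thesis using sin_lower[OF assms(1)] by linarith
qed

lemma c_bound:
  fixes p :: real assumes p: "1 \<le> p"
  shows "0 < c_const p \<and> c_const p * 2 powr (2 - 1/p) \<le> 9"
proof (cases "p = 1")
  case True thus ?thesis by (simp add: c_const_def)
next
  case False
  hence p1: "1 < p" using p by simp
  define u where "u = 1/p"
  define v where "v = 1 - u"
  have u0: "0 < u" and u1: "u < 1" using p1 by (auto simp: u_def)
  have v0: "0 < v" using u1 by (simp add: v_def)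
  have pv: "p - 1 = v/u" using p1 by (simp add: u_def v_def field_simps)
  define S where "S = sin (pi * u)"
  have S0: "0 < S" unfolding S_def using u0 u1 by (intro sin_gt_zero) auto
  define Q where "Q = (v/u) powr u"
  have Q0: "0 \<le> Q" by (simp add: Q_def)
  have Q2: "Q \<le> 2* v"
  proof -
    have "Q \<le> u*(v/u) + (1-u)" using amgm[of "v/u" u] u0 u1 v0 unfolding Q_def by simp
    also have "\<dots> = 2 * v" using u0 by (simp add: v_def)
    finally show ?thesis .
  qed
  have pw: "(p - 1) powr (1/p - 1) = Q / (v/u)"
    using u0 v0 unfolding Q_def pv u_def[symmetric] by (simp add: powr_diff)
  have c_eq: "c_const p = 2 * pi * u^2 * Q / S"
  proof -
    have pw': "(p - 1) powr (1/p - 1) = Q / (p - 1)" using pw pv by simp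
    have e1: "pi - pi/p = pi*(p-1)/p" using p1 by (simp add: field_simps)
    have sp: "sin (pi/p) = S" by (simp add: S_def u_def)
    have "c_const p = (2/p) * ((pi*(p-1)/p) / S) * (Q / (p-1))"
      using False unfolding c_const_def pw' e1 sp by simp
    also have "\<dots> = 2 * pi * u^2 * Q / S" using p1 S0 by (simp add: u_def field_simps power2_eq_square)
    finally show ?thesis .
  qed
  have c0: "0 < c_const p" proof -
    have "0 < Q" using u0 v0 by (simp add: Q_def)
    thus ?thesis using S0 u0 by (simp add: c_eq)
  qed
  have cS: "c_const p * S \<le> 4 * pi * u^2 * v"
    using S0 Q2 u0 by (simp add: c_eq mult_left_mono)
  have p2: "2 powr (2 - 1/p) = 4 / 2 powr u"
    by (simp add: u_def powr_diff)
  have pi_b: "pi \<le> (31416/10000)" using pi_approx(2) by simp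
  have goal: "4 * c_const p \<le> 9 * 2 powr u"
  proof (cases "u \<le> 1/2")
    case True
    have "pi * u \<le> pi * (1/2)" using True by (intro mult_left_mono) auto
    hence x1: "pi * u \<le> 8/5" using pi_b by linarith
    have x2: "(pi*u)^2 \<le> (8/5)^2" using x1 u0 by (intro power_mono) auto
    have "pi*u - (pi*u)^3/53*10 \<le> S" unfolding S_def using x1 u0 by (intro sin_lower2) auto
    moreover have "(pi*u)^3 = (pi*u) * (pi*u)^2" by (simp add: power2_eq_square power3_eq_cube)
    moreover have "(pi*u) * (pi*u)^2 \<le> (pi*u) * (8/5)^2" using x2 u0 by (intro mult_left_mono) auto
    moreover have "(8/5::real)^2 = 64/25" "0 \<le> pi*u" using u0 by (auto simp: power2_eq_square)
    ultimately have Sb: "pi*u/2 \<le> S" by (simp only:)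
    have "c_const p * (pi*u/2) \<le> c_const p * S" using c0 Sb by (intro mult_left_mono) auto
    also have "\<dots> \<le> 4 * pi * u^2 * v" by (rule cS)
    finally have "c_const p \<le> 8 * u * v" using u0 by (simp add: power2_eq_square field_simps)
    moreover have "u * v \<le> 1/4"
    proof -
      have "u * v = 1/4 - (u - 1/2)^2" by (simp add: v_def power2_eq_square algebra_simps)
      thus ?thesis by simp
    qed
    moreover have "1 \<le> 2 powr u" using u0 by (simp add: ge_one_powr_ge_zero)
    ultimately show ?thesis by linarith
  next
    case False
    have vh: "v \<le> 1/2" using False by (simp add: v_def)
    have "pi * v \<le> pi * (1/2)" using vh by (intro mult_left_mono) auto
    hence x1: "pi * v \<le> 8/5" using pi_b by linarith
    have x2: "(pi* v)^2 \<le> (31416/10000)^2 * v^2" using pi_b v0 by (simp add: power_mult_distrib power_mono)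
    have "S = sin (pi * v)" unfolding S_def v_def by (simp add: right_diff_distrib sin_pi_minus)
    moreover have "pi* v - (pi* v)^3/53*10 \<le> sin (pi* v)" using x1 v0 by (intro sin_lower2) auto
    moreover have "(pi* v)^3 = (pi* v) * (pi* v)^2" by (simp add: power2_eq_square power3_eq_cube)
    moreover have "(pi* v) * (pi* v)^2 \<le> (pi* v) * ((31416/10000)^2 * v^2)" using x2 v0 by (intro mult_left_mono) auto
    ultimately have Sb0: "pi* v - (pi* v) * ((31416/10000)^2 * v^2) * 10 / 53 \<le> S" by linarith
    have Sb: "pi* v * (1 - (31416/10000)^2/53*10 * v^2) \<le> S"
      using Sb0 by (simp add: algebra_simps)
    define D where "D = 1 - (31416/10000)^2/53*10 * v^2"
    have vv: "v^2 \<le> v/2" using vh v0 by (simp add: power2_eq_square mult_left_mono)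
    have K: "(31416/10000::real)^2/53*10 \<le> 19/10" by (simp add: power2_eq_square)
    have "(31416/10000::real)^2/53*10 * v^2 \<le> 19/10 * v^2" using K by (intro mult_right_mono) auto
    hence D2: "1 - 19/10 * v^2 \<le> D" unfolding D_def by linarith
    have uv: "u = 1 - v" by (simp add: v_def)
    have D1: "8*u \<le> 9 * D" using D2 vv v0 uv vh by linarith
    have "c_const p * (pi* v * D) \<le> c_const p * S" using c0 Sb unfolding D_def by (intro mult_left_mono) auto
    also have "\<dots> \<le> 4 * pi * u^2 * v" by (rule cS)
    finally have "c_const p * D \<le> 4 * u^2" using v0 by (simp add: power2_eq_square field_simps)
    moreover have "c_const p * (8*u) \<le> c_const p * (9*D)" using D1 c0 by simp
    ultimately have "c_const p * u \<le> (9/2) * u * u" by (simp add: power2_eq_square)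
    hence "c_const p \<le> (9/2) * u" using u0 by simp
    moreover have "2*u \<le> 2 powr u" using u1 by (intro two_powr_ge) auto
    ultimately show ?thesis by linarith
  qed
  have "c_const p * 2 powr (2 - 1/p) = 4 * c_const p / 2 powr u" by (simp add: p2)
  also have "\<dots> \<le> 9" using goal by (simp add: divide_le_eq)
  finally show ?thesis using c0 by simp
qed



lemma tangent:
  fixes m y p :: real
  assumes "0 < m" "0 \<le> y" "1 \<le> p"
  shows "m powr p + p * m powr (p-1) * (y - m) \<le> y powr p"
proof (cases "y = 0")
  case True
  have "m powr (p-1) * m = m powr p" using assms by (simp add: powr_diff)
  hence e: "p * m powr (p-1) * (y - m) = - p * m powr p" using True by (simp add: algebra_simps)
  have "1 * m powr p \<le> p * m powr p" by (rule mult_right_mono) (use assms in auto)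
  thus ?thesis unfolding e using True by simp
next
  case False
  have "p * m powr (p-1) * (y - m) \<le> y powr p - m powr p"
  proof (rule f''_imp_f'[of "{0<..}" "\<lambda>x. x powr p" "\<lambda>x. p * x powr (p-1)"
        "\<lambda>x. p * ((p-1) * x powr (p-1-1))"])
    show "convex {0::real<..}" by simp
    show "DERIV (\<lambda>x. x powr p) x :> p * x powr (p - 1)" if "x \<in> {0<..}" for x
      using that by (auto intro!: derivative_eq_intros)
    show "DERIV (\<lambda>x. p * x powr (p-1)) x :> p * ((p-1) * x powr (p-1-1))" if "x \<in> {0<..}" for x
      using that by (auto intro!: derivative_eq_intros)
    show "0 \<le> p * ((p-1) * x powr (p-1-1))" if "x \<in> {0<..}" for x
      using that assms by simp
  qed (use assms False in auto)
  thus ?thesis by simp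
qed


lemma pmean:
  fixes b :: "'i \<Rightarrow> real" and p :: real
  assumes "finite A" "A \<noteq> {}" "\<And>k. k \<in> A \<Longrightarrow> 0 \<le> b k" "1 \<le> p"
  shows "(\<Sum>k\<in>A. b k) powr p \<le> real (card A) powr (p-1) * (\<Sum>k\<in>A. b k powr p)"
proof -
  define B where "B = (\<Sum>k\<in>A. b k)"
  define N where "N = real (card A)"
  have N0: "0 < N" using assms by (simp add: N_def card_gt_0_iff)
  have B0: "0 \<le> B" unfolding B_def using assms by (simp add: sum_nonneg)
  show ?thesis
  proof (cases "B = 0")
    case True thus ?thesis using assms
      by (simp add: B_def[symmetric] sum_nonneg)
  next
    case False
    define m where "m = B / N"
    have m0: "0 < m" using False B0 N0 by (simp add: m_def)
    have "(\<Sum>k\<in>A. m powr p + p * m powr (p-1) * (b k - m)) \<le> (\<Sum>k\<in>A. b k powr p)"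
      by (intro sum_mono tangent) (use m0 assms in auto)
    moreover have "(\<Sum>k\<in>A. m powr p + p * m powr (p-1) * (b k - m)) = N * m powr p"
    proof -
      have "(\<Sum>k\<in>A. m powr p + p * m powr (p-1) * (b k - m))
          = N * m powr p + p * m powr (p-1) * (B - N * m)"
      proof -
        have "(\<Sum>k\<in>A. p * m powr (p-1) * (b k - m)) = p * m powr (p-1) * (\<Sum>k\<in>A. (b k - m))"
          by (simp add: sum_distrib_left)
        also have "(\<Sum>k\<in>A. (b k - m)) = B - N * m"
          by (simp add: sum_subtractf B_def N_def)
        finally show ?thesis by (simp add: sum.distrib N_def)
      qed
      also have "B - N * m = 0" using N0 by (simp add: m_def)
      finally show ?thesis by simp
    qed
    ultimately have L: "N * m powr p \<le> (\<Sum>k\<in>A. b k powr p)" by simp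
    have "B powr p = N powr (p-1) * (N * m powr p)"
    proof -
      have "B = N * m" using N0 by (simp add: m_def)
      hence "B powr p = N powr p * m powr p" using N0 m0 by (simp add: powr_mult)
      also have "N powr p = N powr (p-1) * N" using N0 by (simp add: powr_diff)
      finally show ?thesis by simp
    qed
    also have "\<dots> \<le> N powr (p-1) * (\<Sum>k\<in>A. b k powr p)"
      using L by (intro mult_left_mono) auto
    finally show ?thesis by (simp add: B_def N_def)
  qed
qed


lemma cont_powr_abs:
  fixes g :: "'a::topological_space \<Rightarrow> real"
  assumes "continuous_on UNIV g" "0 < p"
  shows "continuous_on UNIV (\<lambda>x. \<bar>g x\<bar> powr p)"
proof (rule continuous_on_powr')
  show "continuous_on UNIV (\<lambda>x. \<bar>g x\<bar>)" by (rule continuous_on_rabs[OF assms(1)])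
qed (use assms in auto)

lemma intg:
  fixes g :: "'a::euclidean_space \<Rightarrow> real"
  assumes "continuous_on UNIV g" "bounded {x. g x \<noteq> 0}" "0 < p"
  shows "integrable lborel (\<lambda>x. \<bar>g x\<bar> powr p)"
proof -
  obtain R x0 where R: "{x. g x \<noteq> 0} \<subseteq> cball x0 R"
    using assms(2) unfolding bounded_subset_cball by blast
  have "integrable lborel (\<lambda>x. indicator (cball x0 R) x *\<^sub>R (\<bar>g x\<bar> powr p))"
  proof (rule borel_integrable_compact)
    show "continuous_on (cball x0 R) (\<lambda>x. \<bar>g x\<bar> powr p)"
      using continuous_on_subset[OF cont_powr_abs[OF assms(1,3)], of "cball x0 R"] by simp
  qed simp
  moreover have "(\<lambda>x. indicator (cball x0 R) x *\<^sub>R (\<bar>g x\<bar> powr p)) = (\<lambda>x. \<bar>g x\<bar> powr p)"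
  proof
    fix x show "indicator (cball x0 R) x *\<^sub>R (\<bar>g x\<bar> powr p) = \<bar>g x\<bar> powr p"
      using R by (cases "x \<in> cball x0 R") auto
  qed
  ultimately show ?thesis by (simp only:)
qed

lemma transl:
  fixes g :: "'a::euclidean_space \<Rightarrow> real"
  assumes "g \<in> borel_measurable borel"
  shows "(\<integral>x. g (c + x) \<partial>lborel) = (\<integral>x. g x \<partial>lborel)"
proof -
  have "(\<integral>x. g x \<partial>lborel) = (\<integral>x. g x \<partial>(distr lborel borel ((+) c)))"
    by (simp only: lborel_distr_plus)
  also have "\<dots> = (\<integral>x. g (c + x) \<partial>lborel)"
    by (rule integral_distr[OF _ assms]) simp
  finally show ?thesis by simp
qed

lemma Lp_eq:
  fixes g :: "'a::euclidean_space \<Rightarrow> real"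
  assumes "continuous_on UNIV g" "0 < p"
  shows "Lp_norm p g = (\<integral>x. \<bar>g x\<bar> powr p \<partial>lborel) powr (1/p)"
proof -
  have "(\<lambda>x. \<bar>g x\<bar> powr p) \<in> borel_measurable borel"
    by (rule borel_measurable_continuous_onI[OF cont_powr_abs[OF assms]])
  hence "(\<lambda>x. \<bar>g x\<bar> powr p) \<in> borel_measurable lborel" by simp
  note ic = integral_completion[OF this]
  show ?thesis by (simp only: Lp_norm_def ic)
qed




lemma transl_int:
  fixes g :: "'a::euclidean_space \<Rightarrow> real"
  assumes "integrable lborel g" "g \<in> borel_measurable borel"
  shows "integrable lborel (\<lambda>x. g (c + x))"
proof -
  have "integrable (distr lborel borel ((+) c)) g" using assms(1) by (simp only: lborel_distr_plus)
  thus ?thesis using integrable_distr_eq[of "(+) c" lborel borel g] assms(2) by simp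
qed

lemma telescope:
  fixes f :: "'a::real_vector \<Rightarrow> real"
  shows "f (x + real N *\<^sub>R h) - f x = (\<Sum>k<N. fdiff h f (real k *\<^sub>R h + x))"
proof -
  have "(\<Sum>k<N. fdiff h f (real k *\<^sub>R h + x)) = (\<Sum>k<N. f (x + real (Suc k) *\<^sub>R h) - f (x + real k *\<^sub>R h))"
    by (intro sum.cong) (auto simp: fdiff_def algebra_simps)
  also have "\<dots> = f (x + real N *\<^sub>R h) - f (x + real 0 *\<^sub>R h)"
    by (rule sum_lessThan_telescope)
  finally show ?thesis by simp
qed

lemma key:
  fixes f :: "'a::euclidean_space \<Rightarrow> real" and h :: 'a and N :: nat
  assumes contf: "continuous_on UNIV f" and bdd: "bounded {x. f x \<noteq> 0}" and p: "1 \<le> p"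
    and N: "0 < N"
    and disj: "\<And>x. f x \<noteq> 0 \<Longrightarrow> f (x + real N *\<^sub>R h) = 0"
  shows "2 * (\<integral>x. \<bar>f x\<bar> powr p \<partial>lborel) \<le> real N powr p * (\<integral>x. \<bar>fdiff h f x\<bar> powr p \<partial>lborel)"
proof -
  define G where "G = (\<lambda>x. \<bar>f x\<bar> powr p)"
  define E where "E = (\<lambda>x. \<bar>fdiff h f x\<bar> powr p)"
  have p0: "0 < p" using p by simp
  have contD: "continuous_on UNIV (fdiff h f)"
  proof -
    have "continuous_on UNIV (\<lambda>x. f (x + h))"
      by (rule continuous_on_compose2[OF contf]) (auto intro: continuous_on_add continuous_on_id continuous_on_const)
    hence "continuous_on UNIV (\<lambda>x. f (x + h) - f x)" by (rule continuous_on_diff[OF _ contf])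
    thus ?thesis by (simp add: fdiff_def[abs_def])
  qed
  have bddD: "bounded {x. fdiff h f x \<noteq> 0}"
  proof -
    have "{x. fdiff h f x \<noteq> 0} \<subseteq> {x. f x \<noteq> 0} \<union> (\<lambda>x. x - h) ` {x. f x \<noteq> 0}"
    proof
      fix x assume "x \<in> {x. fdiff h f x \<noteq> 0}"
      hence "f (x + h) \<noteq> 0 \<or> f x \<noteq> 0" by (auto simp: fdiff_def)
      thus "x \<in> {x. f x \<noteq> 0} \<union> (\<lambda>x. x - h) ` {x. f x \<noteq> 0}"
      proof
        assume "f (x + h) \<noteq> 0"
        hence "x + h \<in> {x. f x \<noteq> 0}" by simp
        hence "(x + h) - h \<in> (\<lambda>x. x - h) ` {x. f x \<noteq> 0}" by (rule imageI)
        thus ?thesis by simp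
      qed simp
    qed
    moreover have "bounded ((\<lambda>x. x - h) ` {x. f x \<noteq> 0})"
    proof -
      have "(\<lambda>x. x - h) ` {x. f x \<noteq> 0} = (\<lambda>x. -h + x) ` {x. f x \<noteq> 0}"
        by (rule image_cong) auto
      thus ?thesis using bounded_translation[OF bdd, of "-h"] by (simp only:)
    qed
    ultimately show ?thesis using bdd bounded_Un bounded_subset by metis
  qed
  have Gi: "integrable lborel G" unfolding G_def by (rule intg[OF contf bdd p0])
  have Ei: "integrable lborel E" unfolding E_def by (rule intg[OF contD bddD p0])
  have Gm: "G \<in> borel_measurable borel" unfolding G_def
    by (rule borel_measurable_continuous_onI[OF cont_powr_abs[OF contf p0]])
  have Em: "E \<in> borel_measurable borel" unfolding E_def
    by (rule borel_measurable_continuous_onI[OF cont_powr_abs[OF contD p0]])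
  define NN where "NN = real N"
  have pw: "G x + G (NN *\<^sub>R h + x) \<le> NN powr (p-1) * (\<Sum>k<N. E (real k *\<^sub>R h + x))" for x
  proof -
    have tel: "f (x + NN *\<^sub>R h) - f x = (\<Sum>k<N. fdiff h f (real k *\<^sub>R h + x))"
      unfolding NN_def by (rule telescope)
    have "G x + G (NN *\<^sub>R h + x) = \<bar>f (x + NN *\<^sub>R h) - f x\<bar> powr p"
    proof (cases "f x = 0")
      case True thus ?thesis unfolding G_def using p0 by (simp add: add.commute)
    next
      case False
      hence "f (x + NN *\<^sub>R h) = 0" using disj unfolding NN_def by blast
      thus ?thesis unfolding G_def using p0 by (simp add: add.commute)
    qed
    also have "\<dots> = \<bar>\<Sum>k<N. fdiff h f (real k *\<^sub>R h + x)\<bar> powr p" by (simp only: tel)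
    also have "\<dots> \<le> (\<Sum>k<N. \<bar>fdiff h f (real k *\<^sub>R h + x)\<bar>) powr p"
      by (intro powr_mono2) (use p0 in auto)
    also have "\<dots> \<le> real (card {..<N}) powr (p-1) * (\<Sum>k<N. \<bar>fdiff h f (real k *\<^sub>R h + x)\<bar> powr p)"
      by (rule pmean) (use N p in auto)
    finally show ?thesis by (simp add: E_def NN_def)
  qed
  have Gi2: "integrable lborel (\<lambda>x. G (NN *\<^sub>R h + x))" by (rule transl_int[OF Gi Gm])
  have Eik: "integrable lborel (\<lambda>x. E (real k *\<^sub>R h + x))" for k by (rule transl_int[OF Ei Em])
  have mono: "(\<integral>x. G x + G (NN *\<^sub>R h + x) \<partial>lborel) \<le> (\<integral>x. NN powr (p-1) * (\<Sum>k<N. E (real k *\<^sub>R h + x)) \<partial>lborel)"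
  proof (rule integral_mono)
    show "integrable lborel (\<lambda>x. G x + G (NN *\<^sub>R h + x))" by (rule Bochner_Integration.integrable_add[OF Gi Gi2])
    have "integrable lborel (\<lambda>x. \<Sum>k<N. E (real k *\<^sub>R h + x))" by (rule Bochner_Integration.integrable_sum) (rule Eik)
    thus "integrable lborel (\<lambda>x. NN powr (p-1) * (\<Sum>k<N. E (real k *\<^sub>R h + x)))"
      by (rule Bochner_Integration.integrable_mult_right)
  qed (rule pw)
  have I1: "(\<integral>x. G x + G (NN *\<^sub>R h + x) \<partial>lborel) = 2 * (\<integral>x. G x \<partial>lborel)"
    using Gi Gi2 transl[OF Gm, of "NN *\<^sub>R h"] by simp
  have I2: "(\<integral>x. NN powr (p-1) * (\<Sum>k<N. E (real k *\<^sub>R h + x)) \<partial>lborel)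
      = NN powr (p-1) * (\<Sum>k<N. (\<integral>x. E (real k *\<^sub>R h + x) \<partial>lborel))"
    using Eik by (simp add: integral_sum)
  have I3: "(\<Sum>k<N. (\<integral>x. E (real k *\<^sub>R h + x) \<partial>lborel)) = NN * (\<integral>x. E x \<partial>lborel)"
    using transl[OF Em] by (simp add: NN_def)
  have I4: "NN powr (p-1) * NN = NN powr p" using N by (simp add: NN_def powr_diff)
  have "2 * (\<integral>x. G x \<partial>lborel) \<le> NN powr (p-1) * (NN * (\<integral>x. E x \<partial>lborel))"
    using mono unfolding I1 I2 I3 .
  also have "\<dots> = NN powr p * (\<integral>x. E x \<partial>lborel)" by (simp only: mult.assoc[symmetric] I4)
  finally show ?thesis unfolding G_def E_def NN_def .
qed



lemma cont_fdiff:
  fixes f :: "'a::euclidean_space \<Rightarrow> real"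
  assumes contf: "continuous_on UNIV f"
  shows "continuous_on UNIV (fdiff h f)"
proof -
  have "continuous_on UNIV (\<lambda>x. f (x + h))"
    by (rule continuous_on_compose2[OF contf]) (auto intro: continuous_on_add continuous_on_id continuous_on_const)
  hence "continuous_on UNIV (\<lambda>x. f (x + h) - f x)" by (rule continuous_on_diff[OF _ contf])
  thus ?thesis by (simp add: fdiff_def[abs_def])
qed

lemma t_integral:
  fixes a w B :: real
  assumes "0 < a" "0 < w" "0 \<le> B"
  shows "(\<integral>\<^sup>+ t\<in>{0<..<w}. ennreal (B * t powr (a - 1)) \<partial>lborel) = ennreal (B * (w powr a / a))"
proof -
  have h1: "((\<lambda>x. x powr (a-1)) has_integral (w powr (a-1+1) / (a-1+1))) {0..w}"
    by (rule has_integral_powr_from_0) (use assms in auto)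
  hence "((\<lambda>x. x powr (a-1)) has_integral (w powr a / a)) {0<..<w}"
    by (simp add: has_integral_Icc_iff_Ioo)
  hence h2: "((\<lambda>x. B * x powr (a-1)) has_integral (B * (w powr a / a))) {0<..<w}"
    by (rule has_integral_mult_right)
  have "(\<integral>\<^sup>+ x. ennreal (indicator {0<..<w} x * (B * x powr (a-1))) \<partial>lborel) = ennreal (B * (w powr a / a))"
    by (rule nn_integral_has_integral_lebesgue[OF _ h2]) (use assms in auto)
  moreover have "(\<integral>\<^sup>+ t\<in>{0<..<w}. ennreal (B * t powr (a - 1)) \<partial>lborel)
      = (\<integral>\<^sup>+ x. ennreal (indicator {0<..<w} x * (B * x powr (a-1))) \<partial>lborel)"
    by (rule nn_integral_cong) (simp split: split_indicator)
  ultimately show ?thesis by simp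
qed

theorem mainTheorem18:
  fixes \<Omega> :: "'n::euclidean_space set" and s p q :: real
    and \<xi> :: 'n and f :: "'n \<Rightarrow> real"
  assumes "bounded \<Omega>" and "open \<Omega>"
    and "0 < s" and "s < 1" and "1 \<le> p" and "1 \<le> q"
    and "norm \<xi> = 1"
    and "C1_on_UNIV f"
    and "closure {x. f x \<noteq> 0} \<subseteq> \<Omega>"
  shows "\<forall>I. (\<integral>\<^sup>+ t\<in>{0<..<width \<Omega> \<xi>}.
                 ennreal (t powr (- s * q) * (Lp_norm p (fdiff (t *\<^sub>R \<xi>) f)) powr q / t) \<partial>lborel)
             = ennreal I \<longrightarrow>
           Lp_norm p f \<le>
             (9 / c_const p) * (q / (s * q + 1)) powr (1 / q) * (max 1 (c_const p / 3)) powr (1 - s)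
             * (1 - s) powr (1 / q) * (width \<Omega> \<xi>) powr s * I powr (1 / q)"
proof (intro allI impI)
  fix I
  assume HI: "(\<integral>\<^sup>+ t\<in>{0<..<width \<Omega> \<xi>}.
                 ennreal (t powr (- s * q) * (Lp_norm p (fdiff (t *\<^sub>R \<xi>) f)) powr q / t) \<partial>lborel)
             = ennreal I"
  note bO = assms(1) and oO = assms(2) and s0 = assms(3) and s1 = assms(4) and p1 = assms(5)
    and q1 = assms(6) and nxi = assms(7) and C1 = assms(8) and supp = assms(9)
  define w where "w = width \<Omega> \<xi>"
  define c where "c = c_const p"
  define F where "F = Lp_norm p f"
  define M where "M = max 1 (c / 3)"
  have p0: "0 < p" using p1 by simp
  have q0: "0 < q" using q1 by simp
  have cb: "0 < c \<and> c * 2 powr (2 - 1/p) \<le> 9" unfolding c_def by (rule c_bound[OF p1])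
  have contf: "continuous_on UNIV f"
  proof -
    obtain f' where f': "\<forall>x. (f has_derivative f' x) (at x)" using C1 unfolding C1_on_UNIV_def by blast
    have "\<forall>x\<in>UNIV. isCont f x"
    proof
      fix x show "isCont f x" using has_derivative_continuous[OF f'[rule_format, of x]] .
    qed
    thus ?thesis by (rule continuous_at_imp_continuous_on)
  qed
  have suppO: "{x. f x \<noteq> 0} \<subseteq> \<Omega>" using closure_subset supp by (rule order_trans)
  have bdd: "bounded {x. f x \<noteq> 0}" by (rule bounded_subset[OF bO suppO])
  define L where "L = (\<integral>x. \<bar>f x\<bar> powr p \<partial>lborel)"
  have FL: "F = L powr (1/p)" unfolding F_def L_def by (rule Lp_eq[OF contf p0])
  have F0: "0 \<le> F" by (simp add: FL)
  have RHS0: "0 \<le> (9 / c) * (q / (s * q + 1)) powr (1 / q) * M powr (1 - s)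
             * (1 - s) powr (1 / q) * w powr s * I powr (1 / q)"
    using cb by simp
  show "Lp_norm p f \<le> (9 / c_const p) * (q / (s * q + 1)) powr (1 / q) * (max 1 (c_const p / 3)) powr (1 - s)
             * (1 - s) powr (1 / q) * (width \<Omega> \<xi>) powr s * I powr (1 / q)"
  proof (cases "F = 0")
    case True thus ?thesis using RHS0 unfolding F_def c_def M_def w_def by simp
  next
    case False
    hence Fpos: "0 < F" using F0 by simp
    obtain x0 where x0: "f x0 \<noteq> 0"
    proof (cases "\<exists>x. f x \<noteq> 0")
      case False
      hence "L = 0" unfolding L_def using p0 by simp
      hence "F = 0" by (simp add: FL)
      thus ?thesis using Fpos by simp
    qed blast
    have x0O: "x0 \<in> \<Omega>" using x0 suppO by blast
    have xixi: "\<xi> \<bullet> \<xi> = 1" using nxi by (simp add: power2_norm_eq_inner[symmetric])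
    have bddA: "bdd_above ((\<lambda>xy. (fst xy - snd xy) \<bullet> \<xi>) ` (\<Omega> \<times> \<Omega>))"
    proof -
      obtain B where B: "\<And>x. x \<in> \<Omega> \<Longrightarrow> norm x \<le> B" using bO unfolding bounded_iff by blast
      show ?thesis
      proof (rule bdd_aboveI2)
        fix xy assume "xy \<in> \<Omega> \<times> \<Omega>"
        hence "norm (fst xy) \<le> B" "norm (snd xy) \<le> B" using B by auto
        moreover have "(fst xy - snd xy) \<bullet> \<xi> \<le> norm (fst xy - snd xy) * norm \<xi>"
          by (rule norm_cauchy_schwarz)
        moreover have "norm (fst xy - snd xy) \<le> norm (fst xy) + norm (snd xy)" by (rule norm_triangle_ineq4)
        ultimately show "(fst xy - snd xy) \<bullet> \<xi> \<le> 2 * B" using nxi by simp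
      qed
    qed
    have wle: "(x - y) \<bullet> \<xi> \<le> w" if "x \<in> \<Omega>" "y \<in> \<Omega>" for x y
    proof -
      have "(\<lambda>xy. (fst xy - snd xy) \<bullet> \<xi>) (x, y) \<le> (SUP xy\<in>\<Omega> \<times> \<Omega>. (fst xy - snd xy) \<bullet> \<xi>)"
        by (rule cSUP_upper[OF _ bddA]) (use that in auto)
      thus ?thesis by (simp add: w_def width_def)
    qed
    have w0: "0 < w"
    proof -
      obtain e where e: "0 < e" "ball x0 e \<subseteq> \<Omega>" using oO x0O unfolding open_contains_ball by blast
      define x1 where "x1 = x0 + (e/2) *\<^sub>R \<xi>"
      have "dist x0 x1 = e/2" using e nxi by (simp add: x1_def dist_norm)
      hence "x1 \<in> \<Omega>" using e by auto
      hence "(x1 - x0) \<bullet> \<xi> \<le> w" using wle x0O by blast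
      moreover have "(x1 - x0) \<bullet> \<xi> = e/2" using xixi by (simp add: x1_def)
      ultimately show ?thesis using e by simp
    qed
    define A where "A = 2 powr (1/p) * F / (2 * w)"
    have A0: "0 < A" using Fpos w0 by (simp add: A_def)
    define a where "a = q * (1 - s)"
    have a0: "0 < a" using q0 s1 by (simp add: a_def)
    have L0: "0 \<le> L" unfolding L_def by (rule Bochner_Integration.integral_nonneg) simp
    have lowD: "A * t \<le> Lp_norm p (fdiff (t *\<^sub>R \<xi>) f)" if t: "0 < t" "t < w" for t
    proof -
      define h where "h = t *\<^sub>R \<xi>"
      define N where "N = nat \<lfloor>w/t\<rfloor> + 1"
      have wt0: "0 < w/t" using t by simp
      have wt1: "1 \<le> w/t" using t by simp
      have fl0: "0 \<le> \<lfloor>w/t\<rfloor>" using wt0 by simp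
      have rN: "real N = of_int \<lfloor>w/t\<rfloor> + 1" using fl0 by (simp add: N_def)
      have NN: "w/t < real N" using rN by linarith
      have N2: "real N \<le> 2*w/t" using rN wt1 by linarith
      have Nt: "w < real N * t" using NN t by (simp add: divide_less_eq)
      have Nt2: "real N * t \<le> 2*w" using N2 t by (simp add: le_divide_eq)
      have Npos: "0 < N" by (simp add: N_def)
      have disj: "f (x + real N *\<^sub>R h) = 0" if fx: "f x \<noteq> 0" for x
      proof (rule ccontr)
        assume "f (x + real N *\<^sub>R h) \<noteq> 0"
        hence "x + real N *\<^sub>R h \<in> \<Omega>" using suppO by blast
        moreover have "x \<in> \<Omega>" using fx suppO by blast
        ultimately have "((x + real N *\<^sub>R h) - x) \<bullet> \<xi> \<le> w" by (rule wle)
        moreover have "((x + real N *\<^sub>R h) - x) \<bullet> \<xi> = real N * t" using xixi by (simp add: h_def)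
        ultimately show False using Nt by linarith
      qed
      define LE where "LE = (\<integral>x. \<bar>fdiff h f x\<bar> powr p \<partial>lborel)"
      have kk: "2 * L \<le> real N powr p * LE" unfolding L_def LE_def
        by (rule key[OF contf bdd p1 Npos disj])
      have LD: "Lp_norm p (fdiff h f) = LE powr (1/p)" unfolding LE_def
        by (rule Lp_eq[OF cont_fdiff[OF contf] p0])
      have Np: "0 < real N powr p" using Npos by simp
      have "2 * L / real N powr p \<le> LE" using kk Np by (simp add: divide_le_eq mult.commute)
      hence "(2 * L / real N powr p) powr (1/p) \<le> LE powr (1/p)"
        by (intro powr_mono2) (use p0 L0 Np in auto)
      moreover have "(2 * L / real N powr p) powr (1/p) = 2 powr (1/p) * F / real N"
      proof -
        have "(2 * L / real N powr p) powr (1/p) = (2 * L) powr (1/p) / (real N powr p) powr (1/p)"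
          using L0 Np by (simp add: powr_divide)
        also have "(real N powr p) powr (1/p) = real N" using p0 Npos by (simp add: powr_powr)
        also have "(2 * L) powr (1/p) = 2 powr (1/p) * F" using L0 by (simp add: powr_mult FL)
        finally show ?thesis .
      qed
      ultimately have low1: "2 powr (1/p) * F / real N \<le> Lp_norm p (fdiff h f)" using LD by simp
      have P0: "0 < 2 powr (1/p) * F" using Fpos by simp
      have "A * t = (2 powr (1/p) * F / real N) * (real N * t / (2 * w))"
        using Npos w0 by (simp add: A_def field_simps)
      also have "\<dots> \<le> (2 powr (1/p) * F / real N) * 1"
        using Nt2 w0 P0 Npos by (intro mult_left_mono) (auto simp: divide_le_eq)
      finally show ?thesis using low1 by (simp add: h_def)
    qed
    have integrand: "A powr q * t powr (a - 1) \<le> t powr (- s * q) * (Lp_norm p (fdiff (t *\<^sub>R \<xi>) f)) powr q / t"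
      if t: "0 < t" "t < w" for t
    proof -
      define D where "D = Lp_norm p (fdiff (t *\<^sub>R \<xi>) f)"
      have AtD: "A * t \<le> D" unfolding D_def by (rule lowD[OF t])
      have "(A * t) powr q \<le> D powr q" by (rule powr_mono2) (use AtD A0 t q0 in auto)
      moreover have "A powr q * t powr (a - 1) = t powr (- s * q) * (A * t) powr q / t"
      proof -
        have "t powr (a - 1) = t powr (- s * q + q) / t powr 1"
          by (subst powr_diff[symmetric]) (simp add: a_def algebra_simps)
        also have "t powr (- s * q + q) = t powr (- s * q) * t powr q" by (rule powr_add)
        finally have e: "t powr (a - 1) = t powr (- s * q) * t powr q / t" using t by simp
        show ?thesis unfolding e using A0 t by (simp add: powr_mult)
      qed
      ultimately show ?thesis unfolding D_def[symmetric]
        using t by (simp add: divide_right_mono mult_left_mono)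
    qed
    have "ennreal (A powr q * (w powr a / a)) =
        (\<integral>\<^sup>+ t\<in>{0<..<w}. ennreal (A powr q * t powr (a - 1)) \<partial>lborel)"
      by (rule t_integral[OF a0 w0, symmetric]) (use A0 in simp)
    also have "\<dots> \<le> (\<integral>\<^sup>+ t\<in>{0<..<w}.
                 ennreal (t powr (- s * q) * (Lp_norm p (fdiff (t *\<^sub>R \<xi>) f)) powr q / t) \<partial>lborel)"
    proof (rule nn_integral_mono)
      fix t
      show "ennreal (A powr q * t powr (a - 1)) * indicator {0<..<w} t \<le>
          ennreal (t powr (- s * q) * (Lp_norm p (fdiff (t *\<^sub>R \<xi>) f)) powr q / t) * indicator {0<..<w} t"
      proof (cases "t \<in> {0<..<w}")
        case True
        hence "0 < t" "t < w" by auto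
        from ennreal_leI[OF integrand[OF this]] True show ?thesis by simp
      qed simp
    qed
    also have "\<dots> = ennreal I" using HI by (simp add: w_def)
    finally have VI: "ennreal (A powr q * (w powr a / a)) \<le> ennreal I" .
    define V where "V = A powr q * (w powr a / a)"
    have V0: "0 < V" using A0 w0 a0 by (simp add: V_def)
    have IV: "V \<le> I" using VI V0 unfolding V_def[symmetric] ennreal_le_iff2 by auto
    define qq where "qq = q powr (1/q)"
    define S2 where "S2 = (s*q+1) powr (1/q)"
    define Z where "Z = (1-s) powr (1/q)"
    define Y where "Y = M powr (1-s)"
    define Wv where "Wv = w powr s"
    have sq0: "0 < s * q + 1" using s0 q0 by (simp add: add_pos_pos)
    have qq0: "0 < qq" "0 < Z" "0 < Wv" "0 < S2" using q0 s1 w0 s0 sq0 by (auto simp: qq_def Z_def Wv_def S2_def)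
    have S22: "S2 \<le> 2"
    proof -
      have "S2 \<le> (1/q) * (s*q+1) + (1 - 1/q)" unfolding S2_def
        by (rule amgm) (use s0 q1 in auto)
      also have "\<dots> = s + 1" using q0 by (simp add: field_simps)
      finally show ?thesis using s1 by simp
    qed
    have Y1: "1 \<le> Y" unfolding Y_def M_def by (rule ge_one_powr_ge_zero) (use s1 in auto)
    have cc: "4 * c \<le> 9 * 2 powr (1/p)"
    proof -
      have e: "2 powr (2 - 1/p) * 2 powr (1/p) = 4" by (simp add: powr_add[symmetric])
      have "c * 2 powr (2 - 1/p) * 2 powr (1/p) \<le> 9 * 2 powr (1/p)"
        using cb by (intro mult_right_mono) auto
      thus ?thesis unfolding mult.assoc e by (simp add: mult.commute)
    qed
    have X: "(q / (s * q + 1)) powr (1 / q) = qq / S2"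
      unfolding qq_def S2_def using q0 s0 by (simp add: powr_divide)
    have Vq: "V powr (1/q) = A * (w / Wv) / (qq * Z)"
    proof -
      have "V powr (1/q) = (A powr q) powr (1/q) * (w powr a) powr (1/q) / a powr (1/q)"
        using A0 w0 a0 by (simp add: V_def powr_mult powr_divide)
      also have "(A powr q) powr (1/q) = A" using A0 q0 by (simp add: powr_powr)
      also have "(w powr a) powr (1/q) = w powr (1 - s)" using q0 by (simp add: powr_powr a_def)
      also have "w powr (1 - s) = w / Wv" using w0 by (simp add: Wv_def powr_diff)
      also have "a powr (1/q) = qq * Z" using q0 s1 by (simp add: a_def qq_def Z_def powr_mult)
      finally show ?thesis .
    qed
    define K where "K = (9 / c) * (qq / S2) * Y * Z * Wv"
    have K0: "0 \<le> K" using cb qq0 Y1 by (simp add: K_def)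
    have KV: "K * V powr (1/q) = 9 * Y * 2 powr (1/p) * F / (2 * c * S2)"
      unfolding K_def Vq A_def using qq0 cb w0 by (simp add: field_simps)
    have "F * (2 * c * S2) \<le> F * (9 * Y * 2 powr (1/p))"
    proof (rule mult_left_mono)
      have "2 * c * S2 \<le> 2 * c * 2" using S22 cb by simp
      also have "\<dots> \<le> 9 * 2 powr (1/p)" using cc by simp
      also have "\<dots> \<le> 9 * Y * 2 powr (1/p)" using Y1 by simp
      finally show "2 * c * S2 \<le> 9 * Y * 2 powr (1/p)" .
    qed (use F0 in simp)
    hence "F \<le> K * V powr (1/q)" unfolding KV using cb qq0 by (simp add: le_divide_eq mult.commute)
    also have "\<dots> \<le> K * I powr (1/q)"
      by (intro mult_left_mono powr_mono2) (use K0 V0 IV q0 in auto)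
    finally show ?thesis unfolding K_def X[symmetric] F_def c_def M_def Y_def Z_def Wv_def w_def by simp
  qed
qed


end
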